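(* Let $F(z)=\sum_{k=0}^\infty b_k z^k\in\mathcal{B}$ and $0\le r\le 1/\sqrt3$. Then \[ \sum_{k=2}^\infty k|b_k|^2r^{2k}\le \frac{27}{8}r^4. \]
   Context: $\mathbb{D}$ denotes the open unit disc. $\mathcal{B}$ is the class of functions $F$ analytic in $\mathbb{D}$ satisfying $|F'(z)|\le \frac{1}{1-|z|^2}$ for all $z\in\mathbb{D}$. For $F\in\mathcal{B}$ we write its Taylor expansion as $F(z)=\sum_{k=0}^\infty b_k z^k$. *)

theory Defs
  imports "HOL-Complex_Analysis.Complex_Analysis"
begin

definition bloch_class :: "(complex \<Rightarrow> complex) set" where
  "bloch_class = {F. F holomorphic_on ball 0 1 \<and>
      (\<forall>z\<in>ball 0 1. norm (deriv F z) \<le> 1 / (1 - (norm z)\<^sup>2))}"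

definition taylor_coeff :: "(complex \<Rightarrow> complex) \<Rightarrow> nat \<Rightarrow> complex" where
  "taylor_coeff F k = (deriv ^^ k) F 0 / of_nat (fact k)"

end

theory Submission
  imports Defs
begin

lemma root_orth:
  fixes K n m :: nat assumes nK: "n < K" and mK: "m < K"
  shows "(\<Sum>j<K. exp (\<i> * of_real (2*pi*j*n/K)) * cnj (exp (\<i> * of_real (2*pi*j*m/K))))
         = (if n = m then of_nat K else 0)"
proof -
  define u where "u = exp (\<i> * of_real (2*pi*(real n - real m)/K))"
  have K0: "K > 0" using nK by simp
  have trm: "exp (\<i> * of_real (2*pi*j*n/K)) * cnj (exp (\<i> * of_real (2*pi*j*m/K))) = u ^ j" for j :: nat
  proof -
    have "exp (\<i> * of_real (2*pi*j*n/K)) * cnj (exp (\<i> * of_real (2*pi*j*m/K)))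
        = exp (\<i> * of_real (2*pi*j*n/K) + (- \<i> * of_real (2*pi*j*m/K)))"
      by (simp add: exp_cnj exp_add[symmetric] exp_diff[symmetric])
    also have "\<i> * of_real (2*pi*j*n/K) + (- \<i> * of_real (2*pi*j*m/K)) = of_nat j * (\<i> * of_real (2*pi*(real n - real m)/K))"
      using K0 by (simp add: field_simps)
    also have "exp \<dots> = u ^ j" unfolding u_def by (rule exp_of_nat_mult)
    finally show ?thesis .
  qed
  have S: "(\<Sum>j<K. exp (\<i> * of_real (2*pi*j*n/K)) * cnj (exp (\<i> * of_real (2*pi*j*m/K)))) = (\<Sum>j<K. u ^ j)"
    by (intro sum.cong refl trm)
  have R: "(\<Sum>j<K. u ^ j) = (if n = m then of_nat K else 0)"
  proof (cases "n = m")
    case True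
    then have "u = 1" by (simp add: u_def)
    then show ?thesis using True by simp
  next
    case False
    have uK: "u ^ K = 1"
    proof -
      have "u ^ K = exp (of_nat K * (\<i> * of_real (2*pi*(real n - real m)/K)))"
        unfolding u_def by (rule exp_of_nat_mult[symmetric])
      also have "of_nat K * (\<i> * of_real (2*pi*(real n - real m)/K)) = \<i> * of_real (of_int (2 * (int n - int m)) * pi)"
        using K0 by (simp add: field_simps)
      also have "exp \<dots> = 1" by (subst exp_eq_1) (auto intro!: exI[of _ "int n - int m"])
      finally show ?thesis .
    qed
    have u1: "u \<noteq> 1"
    proof
      assume "u = 1"
      then obtain k :: int where k: "2*pi*(real n - real m)/K = of_int (2*k) * pi"
        unfolding u_def by (subst (asm) exp_eq_1) auto
      then have "(2*pi)*(real n - real m) = (2*pi)*(of_int k * K)" using K0 by (simp add: field_simps)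
      then have "real n - real m = of_int k * K" using pi_gt_zero by (subst (asm) mult_left_cancel) auto
      then have "(of_int (int n - int m) :: real) = of_int (k * int K)" by simp
      then have "int n - int m = k * int K" by (simp only: of_int_eq_iff)
      moreover have "\<bar>int n - int m\<bar> < int K" using nK mK by auto
      ultimately have "k = 0"
      proof -
        assume e: "int n - int m = k * int K" and l: "\<bar>int n - int m\<bar> < int K"
        show "k = 0"
        proof (rule ccontr)
          assume "k \<noteq> 0"
          then have "1 \<le> \<bar>k\<bar>" by simp
          then have "1 * int K \<le> \<bar>k\<bar> * int K" by (intro mult_right_mono) auto
          then show False using e l by (simp add: abs_mult)
        qed
      qed
      then show False using \<open>int n - int m = k * int K\<close> False by simp
    qed
    have "(\<Sum>j<K. u ^ j) = (u ^ K - 1) / (u - 1)" using u1 by (rule geometric_sum)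
    then show ?thesis using uK False by simp
  qed
  show ?thesis by (simp only: S R)
qed


lemma bessel_bound:
  fixes a :: "nat \<Rightarrow> complex" and g :: "complex \<Rightarrow> complex" and \<rho> R M :: real
  assumes sums: "\<And>w. norm w < R \<Longrightarrow> (\<lambda>n. a n * w^n) sums g w"
    and \<rho>0: "0 < \<rho>" and \<rho>R: "\<rho> < R" and bnd: "\<And>w. norm w = \<rho> \<Longrightarrow> norm (g w) \<le> M"
  shows "(\<Sum>n<N. (norm (a n))^2 * \<rho>^(2*n)) \<le> M^2"
proof -
  have M0: "0 \<le> M" using bnd[of "of_real \<rho>"] \<rho>0 by (metis norm_ge_zero norm_of_real abs_of_pos order_trans)
  define c where "c n = norm (a n) * \<rho>^n" for n
  have summ: "summable c"
  proof -
    define \<rho>' where "\<rho>' = (\<rho>+R)/2"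
    have p1: "\<rho>' > 0" "\<rho>' < R" "\<rho> < \<rho>'" using \<rho>0 \<rho>R by (auto simp: \<rho>'_def)
    then have "norm (complex_of_real \<rho>') < R" by simp
    then have "summable (\<lambda>n. a n * (of_real \<rho>')^n)" using sums sums_summable by blast
    then have "summable (\<lambda>n. norm (a n * (of_real \<rho>)^n))"
      by (rule powser_insidea) (use \<rho>0 p1 in simp)
    moreover have "c = (\<lambda>n. norm (a n * (of_real \<rho>)^n))" using \<rho>0 by (simp add: c_def fun_eq_iff norm_mult norm_power)
    ultimately show ?thesis by simp
  qed
  define T where "T = (\<lambda>K. suminf c - (\<Sum>n<K. c n))" 
  have T: "T \<longlonglongrightarrow> 0"
  proof -
    have "(\<lambda>K. suminf c - (\<Sum>n<K. c n)) \<longlonglongrightarrow> suminf c - suminf c"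
      by (intro tendsto_diff tendsto_const summable_LIMSEQ summ)
    then show ?thesis by (simp add: T_def)
  qed
  have main: "(\<Sum>n<N. (norm (a n))^2 * \<rho>^(2*n)) \<le> (M + T K)^2" if KN: "K \<ge> N" and K0: "K > 0" for K
  proof -
    define z where "z j = of_real \<rho> * exp (\<i> * of_real (2*pi*j/K))" for j :: nat
    define P where "P j = (\<Sum>n<K. a n * z j ^ n)" for j
    have zpow: "z j ^ n = of_real (\<rho>^n) * exp (\<i> * of_real (2*pi*j*n/K))" for j n
    proof -
      have "z j ^ n = of_real (\<rho>^n) * exp (of_nat n * (\<i> * of_real (2*pi*j/K)))"
        by (simp only: z_def power_mult_distrib of_real_power exp_of_nat_mult)
      also have "of_nat n * (\<i> * of_real (2*pi*j/K)) = \<i> * of_real (2*pi*j*n/K)"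
        by (simp add: field_simps)
      finally show ?thesis .
    qed
    have nz: "norm (z j) = \<rho>" for j using \<rho>0 by (simp add: z_def norm_mult)
    have PB: "norm (P j) \<le> M + T K" for j
    proof -
      have s: "(\<lambda>n. a n * z j ^ n) sums g (z j)" using sums nz \<rho>R by auto
      have nc: "norm (a n * z j ^ n) = c n" for n by (simp add: c_def norm_mult norm_power nz)
      have sn: "summable (\<lambda>n. norm (a n * z j ^ n))" using summ by (simp add: nc)
      have sn2: "summable (\<lambda>n. norm (a (n+K) * z j ^ (n+K)))"
        using sn by (subst summable_iff_shift) 
      have split: "g (z j) = (\<Sum>n. a (n+K) * z j ^ (n+K)) + P j"
        using suminf_split_initial_segment[OF sums_summable[OF s], of K] s
        by (simp add: P_def sums_iff)
      have "norm (\<Sum>n. a (n+K) * z j ^ (n+K)) \<le> (\<Sum>n. norm (a (n+K) * z j ^ (n+K)))"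
        by (rule summable_norm[OF sn2])
      also have "\<dots> = (\<Sum>n. c (n+K))" by (simp add: nc)
      also have "\<dots> = T K" unfolding T_def by (simp add: suminf_minus_initial_segment[OF summ])
      finally have tl: "norm (\<Sum>n. a (n+K) * z j ^ (n+K)) \<le> T K" .
      have "P j = g (z j) - (\<Sum>n. a (n+K) * z j ^ (n+K))" using split by simp
      then have "norm (P j) \<le> norm (g (z j)) + norm (\<Sum>n. a (n+K) * z j ^ (n+K))"
        by (simp add: norm_triangle_ineq4)
      then show ?thesis using bnd[OF nz[of j]] tl by linarith
    qed
    define E where "E j n = exp (\<i> * of_real (2*pi*j*n/K))" for j n :: nat
    have ID: "(\<Sum>j<K. (norm (P j))^2) = K * (\<Sum>n<K. (norm (a n))^2 * \<rho>^(2*n))"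
    proof -
      have "complex_of_real (\<Sum>j<K. (norm (P j))^2) = (\<Sum>j<K. P j * cnj (P j))"
        by (simp only: of_real_sum complex_norm_square)
      also have "\<dots> = (\<Sum>j<K. \<Sum>n<K. \<Sum>m<K. (a n * cnj (a m) * of_real (\<rho>^n * \<rho>^m)) * (E j n * cnj (E j m)))"
      proof (rule sum.cong[OF refl])
        fix j
        have "P j * cnj (P j) = (\<Sum>n<K. a n * z j ^n) * (\<Sum>m<K. cnj (a m * z j ^ m))"
          by (simp add: P_def cnj_sum)
        also have "\<dots> = (\<Sum>n<K. \<Sum>m<K. (a n * z j ^n) * cnj (a m * z j ^ m))"
          by (simp add: sum_product)
        also have "\<dots> = (\<Sum>n<K. \<Sum>m<K. (a n * cnj (a m) * of_real (\<rho>^n * \<rho>^m)) * (E j n * cnj (E j m)))"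
          by (simp add: zpow E_def mult_ac)
        finally show "P j * cnj (P j) = \<dots>" .
      qed
      also have "\<dots> = (\<Sum>n<K. \<Sum>j<K. \<Sum>m<K. (a n * cnj (a m) * of_real (\<rho>^n * \<rho>^m)) * (E j n * cnj (E j m)))"
        by (rule sum.swap)
      also have "\<dots> = (\<Sum>n<K. \<Sum>m<K. \<Sum>j<K. (a n * cnj (a m) * of_real (\<rho>^n * \<rho>^m)) * (E j n * cnj (E j m)))"
        by (intro sum.cong refl sum.swap)
      also have "\<dots> = (\<Sum>n<K. \<Sum>m<K. (a n * cnj (a m) * of_real (\<rho>^n * \<rho>^m)) * (\<Sum>j<K. E j n * cnj (E j m)))"
        by (simp add: sum_distrib_left)
      also have "\<dots> = (\<Sum>n<K. \<Sum>m<K. (a n * cnj (a m) * of_real (\<rho>^n * \<rho>^m)) * (if n = m then of_nat K else 0))"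
      proof (intro sum.cong refl)
        fix n m assume "n \<in> {..<K}" "m \<in> {..<K}"
        then have "(\<Sum>j<K. E j n * cnj (E j m)) = (if n = m then of_nat K else 0)"
          unfolding E_def by (intro root_orth) auto
        then show "(a n * cnj (a m) * of_real (\<rho>^n * \<rho>^m)) * (\<Sum>j<K. E j n * cnj (E j m)) =
          (a n * cnj (a m) * of_real (\<rho>^n * \<rho>^m)) * (if n = m then of_nat K else 0)" by (simp only:)
      qed
      also have "\<dots> = (\<Sum>n<K. (a n * cnj (a n) * of_real (\<rho>^n * \<rho>^n)) * of_nat K)"
        by (simp add: if_distrib cong: if_cong)
      also have "\<dots> = complex_of_real (K * (\<Sum>n<K. (norm (a n))^2 * \<rho>^(2*n)))"
        by (simp add: complex_norm_square[symmetric] sum_distrib_left power_mult power2_eq_square mult_ac)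
      finally show ?thesis by (simp only: of_real_eq_iff)
    qed
    have "K * (\<Sum>n<K. (norm (a n))^2 * \<rho>^(2*n)) \<le> K * (M + T K)^2"
    proof -
      have "(\<Sum>j<K. (norm (P j))^2) \<le> (\<Sum>j<K. (M + T K)^2)"
        by (intro sum_mono power_mono PB norm_ge_zero)
      then show ?thesis using ID by simp
    qed
    then have "(\<Sum>n<K. (norm (a n))^2 * \<rho>^(2*n)) \<le> (M + T K)^2" using K0 by simp
    moreover have "(\<Sum>n<N. (norm (a n))^2 * \<rho>^(2*n)) \<le> (\<Sum>n<K. (norm (a n))^2 * \<rho>^(2*n))"
      using KN \<rho>0 by (intro sum_mono2) auto
    ultimately show ?thesis by linarith
  qed
  have "(\<lambda>K. (M + T K)^2) \<longlonglongrightarrow> (M + 0)^2"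
    by (intro tendsto_intros T)
  then have L: "(\<lambda>K. (M + T K)^2) \<longlonglongrightarrow> M^2" by simp
  have "\<exists>N0. \<forall>K\<ge>N0. (\<Sum>n<N. (norm (a n))^2 * \<rho>^(2*n)) \<le> (M + T K)^2"
    using main by (intro exI[of _ "Suc N"]) auto
  with L show ?thesis by (rule LIMSEQ_le_const)
qed


theorem corollary2:
  fixes F :: "complex \<Rightarrow> complex" and r :: real
  assumes "F \<in> bloch_class" and "0 \<le> r" and "r \<le> 1 / sqrt 3"
  shows "summable (\<lambda>k. real (k + 2) * (norm (taylor_coeff F (k + 2)))\<^sup>2 * r ^ (2 * (k + 2)))
       \<and> (\<Sum>k. real (k + 2) * (norm (taylor_coeff F (k + 2)))\<^sup>2 * r ^ (2 * (k + 2))) \<le> 27 / 8 * r ^ 4"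
proof -
  have hol: "F holomorphic_on ball 0 1" and bd: "\<And>z. z \<in> ball 0 1 \<Longrightarrow> norm (deriv F z) \<le> 1 / (1 - (norm z)\<^sup>2)"
    using assms(1) by (auto simp: bloch_class_def)
  have holg: "deriv F holomorphic_on ball 0 1" using hol by (rule holomorphic_deriv) simp
  define a where "a n = (deriv ^^ n) (deriv F) 0 / fact n" for n
  have sums: "(\<lambda>n. a n * w^n) sums deriv F w" if "norm w < 1" for w
    using holomorphic_power_series[OF holg, of w] that by (simp add: a_def)
  define \<rho> :: real where "\<rho> = 1 / sqrt 3"
  have \<rho>2: "\<rho>^2 = 1/3" by (simp add: \<rho>_def power_divide)
  have \<rho>0: "0 < \<rho>" by (simp add: \<rho>_def)
  have \<rho>1: "\<rho> < 1" by (simp add: \<rho>_def)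
  have bnd: "norm (deriv F w) \<le> 3/2" if "norm w = \<rho>" for w
    using bd[of w] that \<rho>1 \<rho>2 by simp
  have B: "(\<Sum>n<N. (norm (a n))^2 * \<rho>^(2*n)) \<le> (3/2)^2" for N
    by (rule bessel_bound[OF sums \<rho>0 \<rho>1 bnd])
  have a_eq: "a n = of_nat (Suc n) * taylor_coeff F (Suc n)" for n
  proof -
    have "(deriv ^^ n) (deriv F) = (deriv ^^ Suc n) F" by (simp only: funpow_Suc_right o_def)
    moreover have "(fact n :: complex) \<noteq> 0" "(of_nat (Suc n) :: complex) \<noteq> 0"
      by (simp, metis of_nat_eq_0_iff nat.distinct(1))
    moreover have "(of_nat (fact (Suc n)) :: complex) = of_nat (Suc n) * fact n"
      by (simp only: fact_Suc of_nat_mult of_nat_fact of_nat_id)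
    ultimately show ?thesis unfolding a_def taylor_coeff_def by (simp add: field_simps del: of_nat_Suc fact_Suc)
  qed
  define b where "b k = (norm (taylor_coeff F k))^2" for k
  have b0: "b k \<ge> 0" for k by (simp add: b_def)
  define s where "s k = (norm (a (Suc k)))^2 * \<rho>^(2*(Suc k))" for k
  have s_eq: "s k = real (k+2)^2 * b (k+2) * (1/3)^(k+1)" for k
  proof -
    have nrm: "norm (a (Suc k)) = real (k+2) * norm (taylor_coeff F (k+2))"
      unfolding a_eq norm_mult norm_of_nat by simp
    have "s k = (real (k+2) * norm (taylor_coeff F (k+2)))^2 * (\<rho>^2)^(Suc k)"
      unfolding s_def nrm power_mult ..
    also have "\<dots> = real (k+2)^2 * b (k+2) * (1/3)^(k+1)"
      unfolding \<rho>2 b_def power_mult_distrib by simp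
    finally show ?thesis .
  qed
  have sB: "(\<Sum>k<n. s k) \<le> 9/4" for n
  proof -
    have "(\<Sum>k<Suc n. (norm (a k))^2 * \<rho>^(2*k)) = (norm (a 0))^2 * \<rho>^(2*0) + (\<Sum>k<n. s k)"
      by (simp only: sum.lessThan_Suc_shift s_def)
    moreover have "(norm (a 0))^2 * \<rho>^(2*0) \<ge> 0" by simp
    moreover have "((3::real)/2)^2 = 9/4" by (simp add: power2_eq_square)
    ultimately show ?thesis using B[of "Suc n"] by linarith
  qed
  define t where "t k = real (k + 2) * (norm (taylor_coeff F (k + 2)))\<^sup>2 * r ^ (2 * (k + 2))" for k
  have t0: "t k \<ge> 0" for k using assms(2) by (simp add: t_def)
  have r2: "r^2 \<le> 1/3"
  proof -
    have "r^2 \<le> (1/sqrt 3)^2" using assms(2,3) by (intro power_mono) auto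
    then show ?thesis by (simp add: power_divide)
  qed
  have ts: "t k \<le> (3/2) * r^4 * s k" for k
  proof -
    have rk: "(r^2)^k \<le> (1/3)^k" using r2 assms(2) by (intro power_mono) auto
    have e: "r^(2*(k+2)) = r^4 * (r^2)^k"
    proof -
      have "2*(k+2) = 4 + 2*k" by simp
      then show ?thesis by (simp only: power_add power_mult)
    qed
    have "t k = r^4 * (real (k+2) * b (k+2) * (r^2)^k)"
      unfolding t_def e b_def by (simp only: mult_ac)
    also have "\<dots> \<le> r^4 * (real (k+2) * b (k+2) * (1/3)^k)"
      using rk b0 by (intro mult_left_mono) (auto simp: mult_left_mono)
    also have "\<dots> \<le> r^4 * ((1/2) * real (k+2)^2 * b (k+2) * (1/3)^k)"
    proof -
      have "real (k+2) \<le> (1/2) * real (k+2)^2"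
      proof -
        have "0 \<le> real k * real k + 2 * real k" by simp
        then show ?thesis by (simp add: power2_eq_square algebra_simps)
      qed
      then show ?thesis using b0 by (intro mult_left_mono mult_right_mono) auto
    qed
    also have "\<dots> = (3/2) * r^4 * s k" by (simp add: s_eq)
    finally show ?thesis .
  qed
  have tB: "(\<Sum>k<n. t k) \<le> 27/8 * r^4" for n
  proof -
    have "(\<Sum>k<n. t k) \<le> (\<Sum>k<n. (3/2) * r^4 * s k)" by (intro sum_mono ts)
    also have "\<dots> = (3/2) * r^4 * (\<Sum>k<n. s k)" by (simp add: sum_distrib_left)
    also have "\<dots> \<le> (3/2) * r^4 * (9/4)" using sB[of n] by (intro mult_left_mono) auto
    finally show ?thesis by simp
  qed
  have summ: "summable t"
    by (rule bounded_imp_summable[OF t0, where B="27/8 * r^4"]) (simp only: lessThan_Suc_atMost[symmetric] tB)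
  have "suminf t \<le> 27/8 * r^4" by (rule suminf_le_const[OF summ tB])
  with summ show ?thesis unfolding t_def by (simp add: t_def[abs_def])
qed

end
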